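(* Let $(E,\mathcal{P})$ be a random locally convex module over $K$ with base $(\Omega,\mathcal{F},P)$. Then $E^{\ast}_{max}=E^{\ast}_{\varepsilon,\lambda}$; that is, a module homomorphism $f:E\to L^{0}(\mathcal{F},K)$ is continuous from $(E,\mathcal{T}_{c})$ to $(L^{0}(\mathcal{F},K),\mathcal{T}_{\varepsilon,\lambda})$ if and only if it is continuous from $(E,\mathcal{T}_{\varepsilon,\lambda})$ to $(L^{0}(\mathcal{F},K),\mathcal{T}_{\varepsilon,\lambda})$.
   Context: $(\Omega,\mathcal{F},P)$ is a probability space, $K=\mathbb{R}$ or $\mathbb{C}$, and $L^{0}(\mathcal{F},K)$ is the algebra of equivalence classes (modulo a.s. equality) of $K$-valued measurable random variables. $L^0(\mathcal F,\mathbb R)$ is ordered by $\xi\le\eta$ iff $\xi^0\le\eta^0$ a.s. for representatives; $L^{0}_{+}=\{\xi\in L^0(\mathcal F,\mathbb R):\xi\ge 0\}$, $L^{0}_{++}=\{\xi: \xi>0 \text{ a.s. on }\Omega\}$; $|\xi|$ is the pointwise absolute value. An $L^0$-seminorm on a left $L^0(\mathcal F,K)$-module $E$ is a map $\|\cdot\|:E\to L^0_+$ with $\|x+y\|\le\|x\|+\|y\|$ and $\|\xi x\|=|\xi|\,\|x\|$ for all $\xi\in L^0(\mathcal F,K)$, $x,y\in E$. A random locally convex module over $K$ with base $(\Omega,\mathcal F,P)$ is a pair $(E,\mathcal P)$ where $E$ is a left $L^0(\mathcal F,K)$-module and $\mathcal P$ is a family of $L^0$-seminorms on $E$ such that $\bigvee\{\|x\|:\|\cdot\|\in\mathcal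 P\}=0$ implies $x=0$. $\mathcal F(\mathcal P)$ denotes the set of finite subfamilies of $\mathcal P$, and for $\mathcal Q\in\mathcal F(\mathcal P)$, $\|x\|_{\mathcal Q}=\bigvee\{\|x\|:\|\cdot\|\in\mathcal Q\}$. The $(\varepsilon,\lambda)$-topology $\mathcal T_{\varepsilon,\lambda}$ on $E$ is the linear topology with local base at $0$ given by the sets $\{x\in E: P\{\omega:\|x\|_{\mathcal Q}(\omega)<\varepsilon\}>1-\lambda\}$, $\mathcal Q\in\mathcal F(\mathcal P)$, $\varepsilon>0$, $0<\lambda<1$. The locally $L^0$-convex topology $\mathcal T_c$ on $E$: $G\subset E$ is open iff for every $x\in G$ there are $\mathcal Q\in\mathcal F(\mathcal P)$ and $\varepsilon\in L^0_{++}$ with $x+\{y:\|y\|_{\mathcal Q}\le\varepsilon\}\subset G$. $L^0(\mathcal F,K)$ itself is regarded as a random locally convex module with $\mathcal P=\{|\cdot|\}$; then $\mathcal T_{\varepsilon,\lambda}$ on it is the topology of convergence in probability. Module homomorphism means $L^0(\mathcal F,K)$-linear map. $E^\ast_{\varepsilon,\lambda}$ is the set of module homomorphisms $f:E\to L^0(\mathcal F,K)$ continuous from $(E,\mathcal T_{\varepsilon,\lambda})$ to $(L^0(\mathcal F,K),\mathcal T_{\varepsilon,\lambda})$; $E^\ast_{max}$ is the set of module homomorphisms continuous from $(E,\mathcal T_{c})$ to $(L^0(\mathcal F,K),\mathcal T_{\varepsilon,\lambda})$. *)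

theory Defs
  imports "HOL-Probability.Probability"
begin

text \<open>Elements of L0(F,K) are represented by measurable representatives
  \<open>'a \<Rightarrow> 'k\<close>; statements about L0 equality / order are made almost surely.\<close>

definition L0 :: "'a measure \<Rightarrow> ('a \<Rightarrow> 'k::real_normed_field) set" where
  "L0 M = borel_measurable M"

definition ae_eq :: "'a measure \<Rightarrow> ('a \<Rightarrow> 'b) \<Rightarrow> ('a \<Rightarrow> 'b) \<Rightarrow> bool" where
  "ae_eq M f g \<longleftrightarrow> (AE \<omega> in M. f \<omega> = g \<omega>)"

definition L0_module ::
  "'a measure \<Rightarrow> (('a \<Rightarrow> 'k::real_normed_field) \<Rightarrow> 'e::ab_group_add \<Rightarrow> 'e) \<Rightarrow> bool" where
  "L0_module M scal \<longleftrightarrow>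
     (\<forall>\<xi>\<in>L0 M. \<forall>\<eta>\<in>L0 M. \<forall>x. ae_eq M \<xi> \<eta> \<longrightarrow> scal \<xi> x = scal \<eta> x) \<and>
     (\<forall>\<xi>\<in>L0 M. \<forall>x y. scal \<xi> (x + y) = scal \<xi> x + scal \<xi> y) \<and>
     (\<forall>\<xi>\<in>L0 M. \<forall>\<eta>\<in>L0 M. \<forall>x. scal (\<lambda>\<omega>. \<xi> \<omega> + \<eta> \<omega>) x = scal \<xi> x + scal \<eta> x) \<and>
     (\<forall>\<xi>\<in>L0 M. \<forall>\<eta>\<in>L0 M. \<forall>x. scal (\<lambda>\<omega>. \<xi> \<omega> * \<eta> \<omega>) x = scal \<xi> (scal \<eta> x)) \<and>
     (\<forall>x. scal (\<lambda>\<omega>. 1) x = x)"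

definition L0_seminorm ::
  "'a measure \<Rightarrow> (('a \<Rightarrow> 'k::real_normed_field) \<Rightarrow> 'e::ab_group_add \<Rightarrow> 'e)
     \<Rightarrow> ('e \<Rightarrow> 'a \<Rightarrow> real) \<Rightarrow> bool" where
  "L0_seminorm M scal p \<longleftrightarrow>
     (\<forall>x. p x \<in> borel_measurable M \<and> (AE \<omega> in M. 0 \<le> p x \<omega>)) \<and>
     (\<forall>x y. AE \<omega> in M. p (x + y) \<omega> \<le> p x \<omega> + p y \<omega>) \<and>
     (\<forall>\<xi>\<in>L0 M. \<forall>x. AE \<omega> in M. p (scal \<xi> x) \<omega> = norm (\<xi> \<omega>) * p x \<omega>)"

text \<open>The separation axiom
  \<open>\<Or>{\<parallel>x\<parallel> : \<parallel>.\<parallel> \<in> P} = 0 \<Longrightarrow> x = 0\<close> is written out: since all the seminorm values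
  are nonnegative, the supremum is 0 iff every \<open>\<parallel>x\<parallel>\<close> is 0 a.s.\<close>
definition RLC_module ::
  "'a measure \<Rightarrow> (('a \<Rightarrow> 'k::real_normed_field) \<Rightarrow> 'e::ab_group_add \<Rightarrow> 'e)
     \<Rightarrow> ('e \<Rightarrow> 'a \<Rightarrow> real) set \<Rightarrow> bool" where
  "RLC_module M scal \<P> \<longleftrightarrow>
     prob_space M \<and> L0_module M scal \<and> (\<forall>p\<in>\<P>. L0_seminorm M scal p) \<and>
     (\<forall>x. (\<forall>p\<in>\<P>. AE \<omega> in M. p x \<omega> = 0) \<longrightarrow> x = 0)"

definition fin_sub :: "'s set \<Rightarrow> 's set \<Rightarrow> bool" where
  "fin_sub \<P> Q \<longleftrightarrow> finite Q \<and> Q \<noteq> {} \<and> Q \<subseteq> \<P>"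

definition qnorm :: "('e \<Rightarrow> 'a \<Rightarrow> real) set \<Rightarrow> 'e \<Rightarrow> 'a \<Rightarrow> real" where
  "qnorm Q x \<omega> = Max ((\<lambda>p. p x \<omega>) ` Q)"

definition open_el :: "'a measure \<Rightarrow> ('e::ab_group_add \<Rightarrow> 'a \<Rightarrow> real) set \<Rightarrow> 'e set \<Rightarrow> bool" where
  "open_el M \<P> G \<longleftrightarrow>
     (\<forall>x\<in>G. \<exists>Q \<epsilon> lam. fin_sub \<P> Q \<and> 0 < \<epsilon> \<and> 0 < lam \<and> lam < 1 \<and>
        (\<forall>y. measure M {\<omega> \<in> space M. qnorm Q y \<omega> < \<epsilon>} > 1 - lam \<longrightarrow> x + y \<in> G))"

definition open_c :: "'a measure \<Rightarrow> ('e::ab_group_add \<Rightarrow> 'a \<Rightarrow> real) set \<Rightarrow> 'e set \<Rightarrow> bool" where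
  "open_c M \<P> G \<longleftrightarrow>
     (\<forall>x\<in>G. \<exists>Q \<epsilon>. fin_sub \<P> Q \<and> \<epsilon> \<in> borel_measurable M \<and> (AE \<omega> in M. 0 < \<epsilon> \<omega>) \<and>
        (\<forall>y. (AE \<omega> in M. qnorm Q y \<omega> \<le> \<epsilon> \<omega>) \<longrightarrow> x + y \<in> G))"

text \<open>Open sets of the (\<epsilon>,\<lambda>)-topology (convergence in probability) on L0(F,K),
  with \<P> = {|.|}; open sets are subsets of L0 (automatically saturated under a.s. equality).\<close>
definition open_L0 :: "'a measure \<Rightarrow> ('a \<Rightarrow> 'k::real_normed_field) set \<Rightarrow> bool" where
  "open_L0 M G \<longleftrightarrow> G \<subseteq> L0 M \<and>
     (\<forall>\<xi>\<in>G. \<exists>\<epsilon> lam. 0 < \<epsilon> \<and> 0 < lam \<and> lam < 1 \<and>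
        (\<forall>\<eta>\<in>L0 M. measure M {\<omega> \<in> space M. norm (\<eta> \<omega> - \<xi> \<omega>) < \<epsilon>} > 1 - lam \<longrightarrow> \<eta> \<in> G))"

definition L0_module_hom ::
  "'a measure \<Rightarrow> (('a \<Rightarrow> 'k::real_normed_field) \<Rightarrow> 'e::ab_group_add \<Rightarrow> 'e) \<Rightarrow> ('e \<Rightarrow> 'a \<Rightarrow> 'k) \<Rightarrow> bool" where
  "L0_module_hom M scal f \<longleftrightarrow>
     (\<forall>x. f x \<in> L0 M) \<and>
     (\<forall>x y. ae_eq M (f (x + y)) (\<lambda>\<omega>. f x \<omega> + f y \<omega>)) \<and>
     (\<forall>\<xi>\<in>L0 M. \<forall>x. ae_eq M (f (scal \<xi> x)) (\<lambda>\<omega>. \<xi> \<omega> * f x \<omega>))"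

definition cont_wrt :: "('x set \<Rightarrow> bool) \<Rightarrow> ('y set \<Rightarrow> bool) \<Rightarrow> ('x \<Rightarrow> 'y) \<Rightarrow> bool" where
  "cont_wrt openS openT f \<longleftrightarrow> (\<forall>G. openT G \<longrightarrow> openS {x. f x \<in> G})"

end

theory Submission
  imports Defs
begin

lemma qnorm_meas:
  assumes "fin_sub \<P> Q" "\<forall>p\<in>\<P>. L0_seminorm M scal p"
  shows "qnorm Q y \<in> borel_measurable M"
proof -
  have eq: "qnorm Q y = (\<lambda>\<omega>. Max ((\<lambda>p. p y \<omega>) ` Q))" by (rule ext) (simp add: qnorm_def)
  have "\<And>p. p \<in> Q \<Longrightarrow> p y \<in> borel_measurable M"
    using assms unfolding fin_sub_def L0_seminorm_def by blast
  then show ?thesis unfolding eq using assms(1) unfolding fin_sub_def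
    by (intro borel_measurable_Max) auto
qed

lemma (in prob_space) prob_Int_ge:
  assumes "A \<in> events" "B \<in> events"
  shows "prob A + prob B - 1 \<le> prob (A \<inter> B)"
proof -
  have "prob (A \<union> B) \<le> 1" by simp
  moreover have "prob (A \<union> B) = prob A + prob B - prob (A \<inter> B)"
    using assms by (simp add: finite_measure_Union' finite_measure_Diff' Int_commute)
  ultimately show ?thesis by linarith
qed

theorem theorem1p1:
  fixes M :: "'a measure"
    and scal :: "('a \<Rightarrow> 'k::{real_normed_field, second_countable_topology}) \<Rightarrow> 'e::ab_group_add \<Rightarrow> 'e"
    and \<P> :: "('e \<Rightarrow> 'a \<Rightarrow> real) set"
    and f :: "'e \<Rightarrow> 'a \<Rightarrow> 'k"
  assumes "RLC_module M scal \<P>"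
    and "L0_module_hom M scal f"
  shows "cont_wrt (open_c M \<P>) (open_L0 M) f \<longleftrightarrow> cont_wrt (open_el M \<P>) (open_L0 M) f"
proof -
  have ps: "prob_space M" and sn: "\<forall>p\<in>\<P>. L0_seminorm M scal p"
    using assms(1) unfolding RLC_module_def by auto
  interpret prob_space M by (rule ps)
  have el_c: "open_c M \<P> G" if oel: "open_el M \<P> G" for G
    unfolding open_c_def
  proof
    fix x assume "x \<in> G"
    then obtain Q \<epsilon> lam where Q: "fin_sub \<P> Q" and e: "0 < \<epsilon>" "0 < lam" "lam < 1"
      and H: "\<forall>y. measure M {\<omega> \<in> space M. qnorm Q y \<omega> < \<epsilon>} > 1 - lam \<longrightarrow> x + y \<in> G"
      using oel \<open>x \<in> G\<close> unfolding open_el_def by blast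
    show "\<exists>Q \<epsilon>. fin_sub \<P> Q \<and> \<epsilon> \<in> borel_measurable M \<and> (AE \<omega> in M. 0 < \<epsilon> \<omega>) \<and>
        (\<forall>y. (AE \<omega> in M. qnorm Q y \<omega> \<le> \<epsilon> \<omega>) \<longrightarrow> x + y \<in> G)"
    proof (intro exI conjI allI impI)
      show "fin_sub \<P> Q" by (rule Q)
      show "(\<lambda>_. \<epsilon>/2) \<in> borel_measurable M" by simp
      show "AE \<omega> in M. 0 < \<epsilon>/2" using e by simp
      fix y assume a: "AE \<omega> in M. qnorm Q y \<omega> \<le> \<epsilon>/2"
      have m: "qnorm Q y \<in> borel_measurable M" using qnorm_meas[OF Q sn] .
      have s: "{\<omega> \<in> space M. qnorm Q y \<omega> < \<epsilon>} \<in> events" using m by measurable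
      have "AE \<omega> in M. \<omega> \<in> {\<omega> \<in> space M. qnorm Q y \<omega> < \<epsilon>}"
        using a AE_space apply eventually_elim using e by auto
      then have "prob {\<omega> \<in> space M. qnorm Q y \<omega> < \<epsilon>} = 1" using prob_eq_1[OF s] by simp
      then show "x + y \<in> G" using H e by auto
    qed
  qed

  have c_el: "cont_wrt (open_el M \<P>) (open_L0 M) f" if cc: "cont_wrt (open_c M \<P>) (open_L0 M) f"
    unfolding cont_wrt_def
  proof (intro allI impI)
    fix G :: "('a \<Rightarrow> 'k) set" assume oG: "open_L0 M G"
    have fL0: "\<And>x. f x \<in> borel_measurable M"
      using assms(2) unfolding L0_module_hom_def L0_def by blast
    have fadd: "\<And>x y. AE \<omega> in M. f (x + y) \<omega> = f x \<omega> + f y \<omega>"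
      using assms(2) unfolding L0_module_hom_def ae_eq_def by blast
    have fscal: "\<And>\<xi> x. \<xi> \<in> borel_measurable M \<Longrightarrow> AE \<omega> in M. f (scal \<xi> x) \<omega> = \<xi> \<omega> * f x \<omega>"
      using assms(2) unfolding L0_module_hom_def ae_eq_def L0_def by blast
    have f0: "AE \<omega> in M. f 0 \<omega> = 0"
      using fadd[of 0 0] by eventually_elim simp
    show "open_el M \<P> {x. f x \<in> G}"
      unfolding open_el_def
    proof
      fix x assume "x \<in> {x. f x \<in> G}"
      then have fxG: "f x \<in> G" by simp
      then obtain \<delta> lam where dl: "0 < \<delta>" "0 < lam" "lam < 1"
        and HG: "\<forall>\<eta>\<in>L0 M. measure M {\<omega> \<in> space M. norm (\<eta> \<omega> - f x \<omega>) < \<delta>} > 1 - lam \<longrightarrow> \<eta> \<in> G"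
        using oG unfolding open_L0_def by blast
      define G0 :: "('a \<Rightarrow> 'k) set" where "G0 = {\<eta>\<in>L0 M. \<exists>e>0. measure M {\<omega>\<in>space M. norm (\<eta> \<omega>) < \<delta> - e} > 1 - lam/2}"
      have oG0: "open_L0 M G0"
        unfolding open_L0_def
      proof (intro conjI ballI)
        show "G0 \<subseteq> L0 M" unfolding G0_def by blast
        fix \<xi> assume "\<xi> \<in> G0"
        then obtain e where xi: "\<xi> \<in> borel_measurable M" and e: "e > 0"
          and pe: "measure M {\<omega>\<in>space M. norm (\<xi> \<omega>) < \<delta> - e} > 1 - lam/2"
          unfolding G0_def L0_def by blast
        define \<gamma> where "\<gamma> = measure M {\<omega>\<in>space M. norm (\<xi> \<omega>) < \<delta> - e} - (1 - lam/2)"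
        have g0: "0 < \<gamma>" using pe unfolding \<gamma>_def by simp
        have g1: "\<gamma> < 1" unfolding \<gamma>_def using dl prob_le_1[of "{\<omega>\<in>space M. norm (\<xi> \<omega>) < \<delta> - e}"] by linarith
        show "\<exists>\<epsilon> lam. 0 < \<epsilon> \<and> 0 < lam \<and> lam < 1 \<and>
          (\<forall>\<eta>\<in>L0 M. measure M {\<omega> \<in> space M. norm (\<eta> \<omega> - \<xi> \<omega>) < \<epsilon>} > 1 - lam \<longrightarrow> \<eta> \<in> G0)"
        proof (intro exI conjI ballI impI)
          show "0 < e/2" using e by simp
          show "0 < \<gamma>" "\<gamma> < 1" using g0 g1 .
          fix \<eta> assume eL: "\<eta> \<in> L0 M"
            and pn: "measure M {\<omega> \<in> space M. norm (\<eta> \<omega> - \<xi> \<omega>) < e/2} > 1 - \<gamma>"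
          have eta: "\<eta> \<in> borel_measurable M" using eL unfolding L0_def .
          let ?A = "{\<omega>\<in>space M. norm (\<xi> \<omega>) < \<delta> - e}"
          let ?B = "{\<omega> \<in> space M. norm (\<eta> \<omega> - \<xi> \<omega>) < e/2}"
          let ?C = "{\<omega>\<in>space M. norm (\<eta> \<omega>) < \<delta> - e/2}"
          have sA: "?A \<in> events" using xi by measurable
          have dm: "(\<lambda>\<omega>. norm (\<eta> \<omega> - \<xi> \<omega>)) \<in> borel_measurable M"
            by (rule measurable_compose[OF borel_measurable_diff[OF eta xi] borel_measurable_norm])
          have sB: "?B \<in> events" using dm by measurable
          have sC: "?C \<in> events" using eta by measurable
          have sub: "?A \<inter> ?B \<subseteq> ?C"
          proof
            fix \<omega> assume "\<omega> \<in> ?A \<inter> ?B"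
            moreover have "norm (\<eta> \<omega>) \<le> norm (\<xi> \<omega>) + norm (\<eta> \<omega> - \<xi> \<omega>)"
              using norm_triangle_ineq[of "\<xi> \<omega>" "\<eta> \<omega> - \<xi> \<omega>"] by simp
            ultimately show "\<omega> \<in> ?C" by auto
          qed
          have "prob ?A + prob ?B - 1 \<le> prob (?A \<inter> ?B)" by (rule prob_Int_ge[OF sA sB])
          also have "\<dots> \<le> prob ?C" using sub sC by (intro finite_measure_mono) auto
          finally have "prob ?C > 1 - lam/2" using pn unfolding \<gamma>_def by linarith
          then show "\<eta> \<in> G0" unfolding G0_def using eL e by (intro CollectI conjI exI[of _ "e/2"]) auto
        qed
      qed
      have "0 \<in> {x. f x \<in> G0}"
      proof -
        let ?S = "{\<omega>\<in>space M. norm (f 0 \<omega>) < \<delta> - \<delta>/2}"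
        have sS: "?S \<in> events" using fL0[of 0] by measurable
        have "AE \<omega> in M. \<omega> \<in> ?S" using f0 AE_space apply eventually_elim using dl by auto
        then have "prob ?S = 1" using prob_eq_1[OF sS] by simp
        then show ?thesis unfolding G0_def L0_def using fL0[of 0] dl
          by (intro CollectI conjI exI[of _ "\<delta>/2"]) auto
      qed
      moreover have "open_c M \<P> {x. f x \<in> G0}" using cc oG0 unfolding cont_wrt_def by blast
      ultimately obtain Q \<epsilon>0 where Q: "fin_sub \<P> Q" and e0m: "\<epsilon>0 \<in> borel_measurable M"
        and e0p: "AE \<omega> in M. 0 < \<epsilon>0 \<omega>"
        and H0: "\<forall>y. (AE \<omega> in M. qnorm Q y \<omega> \<le> \<epsilon>0 \<omega>) \<longrightarrow> 0 + y \<in> {x. f x \<in> G0}"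
        unfolding open_c_def by blast
      define An where "An n = {\<omega>\<in>space M. 1 / real (Suc n) \<le> \<epsilon>0 \<omega>}" for n
      have "(\<lambda>n. prob (An n)) \<longlonglongrightarrow> prob (\<Union>n. An n)"
      proof (rule finite_Lim_measure_incseq)
        show "range An \<subseteq> events" unfolding An_def using e0m by auto
        show "incseq An" unfolding An_def incseq_def
        proof (intro allI impI subsetI)
          fix m n :: nat and \<omega> assume "m \<le> n" "\<omega> \<in> {\<omega> \<in> space M. 1 / real (Suc m) \<le> \<epsilon>0 \<omega>}"
          moreover have "1 / real (Suc n) \<le> 1 / real (Suc m)" using \<open>m \<le> n\<close> by (simp add: frac_le)
          ultimately show "\<omega> \<in> {\<omega> \<in> space M. 1 / real (Suc n) \<le> \<epsilon>0 \<omega>}" by auto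
        qed
      qed
      moreover have "prob (\<Union>n. An n) = 1"
      proof -
        have sU: "(\<Union>n. An n) \<in> events" unfolding An_def using e0m by measurable
        have "AE \<omega> in M. \<omega> \<in> (\<Union>n. An n)" using e0p AE_space
        proof eventually_elim
          case (elim \<omega>)
          then obtain n where "inverse (real (Suc n)) < \<epsilon>0 \<omega>" using reals_Archimedean by blast
          then show ?case unfolding An_def using elim by (auto simp: divide_inverse intro!: exI[of _ n])
        qed
        then show ?thesis using prob_eq_1[OF sU] by simp
      qed
      ultimately have "(\<lambda>n. prob (An n)) \<longlonglongrightarrow> 1" by simp
      then have "eventually (\<lambda>n. prob (An n) > 1 - lam/4) sequentially"
        using dl by (intro order_tendstoD(1)) auto
      then obtain N where pN: "prob (An N) > 1 - lam/4" by (metis eventually_sequentially order_refl)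
      define \<epsilon>' where "\<epsilon>' = 1 / real (Suc N)"
      have e'p: "0 < \<epsilon>'" unfolding \<epsilon>'_def by simp
      show "\<exists>Q \<epsilon> lam. fin_sub \<P> Q \<and> 0 < \<epsilon> \<and> 0 < lam \<and> lam < 1 \<and>
        (\<forall>y. measure M {\<omega> \<in> space M. qnorm Q y \<omega> < \<epsilon>} > 1 - lam \<longrightarrow> x + y \<in> {x. f x \<in> G})"
      proof (intro exI conjI allI impI)
        show "fin_sub \<P> Q" by (rule Q)
        show "0 < \<epsilon>'" by (rule e'p)
        show "0 < lam/4" "lam/4 < 1" using dl by auto
        fix y assume py: "measure M {\<omega> \<in> space M. qnorm Q y \<omega> < \<epsilon>'} > 1 - lam/4"
        have qm: "qnorm Q y \<in> borel_measurable M" using qnorm_meas[OF Q sn] .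
        define A where "A = {\<omega>\<in>space M. qnorm Q y \<omega> \<le> \<epsilon>0 \<omega>}"
        have sA: "A \<in> events" unfolding A_def using qm e0m by measurable
        define ind :: "'a \<Rightarrow> 'k" where "ind = (\<lambda>\<omega>. if \<omega> \<in> A then 1 else 0)"
        have indm: "ind \<in> borel_measurable M" unfolding ind_def using sA by measurable
        define z where "z = scal ind y"
        have Qfin: "finite Q" "Q \<noteq> {}" "Q \<subseteq> \<P>" using Q unfolding fin_sub_def by auto
        have pz: "\<And>p. p \<in> Q \<Longrightarrow> AE \<omega> in M. p z \<omega> = norm (ind \<omega>) * p y \<omega>"
          using sn Qfin(3) indm unfolding z_def L0_seminorm_def L0_def by blast
        have "AE \<omega> in M. \<forall>p\<in>Q. p z \<omega> = norm (ind \<omega>) * p y \<omega>"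
          using Qfin(1) pz by (rule AE_finite_allI)
        then have "AE \<omega> in M. qnorm Q z \<omega> \<le> \<epsilon>0 \<omega>" using e0p AE_space
        proof eventually_elim
          case (elim \<omega>)
          have "\<forall>p\<in>Q. p z \<omega> \<le> \<epsilon>0 \<omega>"
          proof
            fix p assume pQ: "p \<in> Q"
            show "p z \<omega> \<le> \<epsilon>0 \<omega>"
            proof (cases "\<omega> \<in> A")
              case True
              have "p y \<omega> \<le> qnorm Q y \<omega>" unfolding qnorm_def using Qfin pQ by (intro Max_ge) auto
              then show ?thesis using True elim pQ unfolding ind_def A_def by auto
            next
              case False then show ?thesis using elim pQ unfolding ind_def by auto
            qed
          qed
          then show ?case unfolding qnorm_def using Qfin by (subst Max_le_iff) auto
        qed
        then have "f z \<in> G0" using H0 by auto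
        then obtain e where e: "e > 0" and pfz: "prob {\<omega>\<in>space M. norm (f z \<omega>) < \<delta> - e} > 1 - lam/2"
          unfolding G0_def by blast
        have fz: "AE \<omega> in M. f z \<omega> = ind \<omega> * f y \<omega>" unfolding z_def by (rule fscal[OF indm])
        let ?S1 = "{\<omega>\<in>space M. norm (f z \<omega>) < \<delta> - e}"
        let ?S2 = "{\<omega> \<in> space M. qnorm Q y \<omega> < \<epsilon>'}"
        let ?T = "{\<omega> \<in> space M. norm (f (x + y) \<omega> - f x \<omega>) < \<delta>}"
        have s1: "?S1 \<in> events" using fL0[of z] by measurable
        have s2: "?S2 \<in> events" using qm by measurable
        have s3: "An N \<in> events" unfolding An_def using e0m by measurable
        have dm: "(\<lambda>\<omega>. norm (f (x + y) \<omega> - f x \<omega>)) \<in> borel_measurable M"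
          by (rule measurable_compose[OF borel_measurable_diff[OF fL0[of "x+y"] fL0[of x]] borel_measurable_norm])
        have sT: "?T \<in> events" using dm by measurable
        have "prob ?S1 + prob ?S2 - 1 \<le> prob (?S1 \<inter> ?S2)" by (rule prob_Int_ge[OF s1 s2])
        also have "prob (?S1 \<inter> ?S2) + prob (An N) - 1 \<le> prob (?S1 \<inter> ?S2 \<inter> An N)"
          using s1 s2 s3 by (intro prob_Int_ge) auto
        moreover have "prob (?S1 \<inter> ?S2 \<inter> An N) \<le> prob ?T"
        proof (rule finite_measure_mono_AE[OF _ sT])
          show "AE \<omega> in M. \<omega> \<in> ?S1 \<inter> ?S2 \<inter> An N \<longrightarrow> \<omega> \<in> ?T"
            using fz fadd[of x y]
          proof eventually_elim
            case (elim \<omega>)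
            show ?case
            proof
              assume w: "\<omega> \<in> ?S1 \<inter> ?S2 \<inter> An N"
              then have "\<omega> \<in> A" unfolding A_def An_def \<epsilon>'_def by auto
              then have "f z \<omega> = f y \<omega>" using elim unfolding ind_def by simp
              then show "\<omega> \<in> ?T" using w elim e by auto
            qed
          qed
        qed
        ultimately have "prob ?T > 1 - lam" using pfz py pN by linarith
        moreover have "f (x + y) \<in> L0 M" using fL0 unfolding L0_def by blast
        ultimately have "f (x + y) \<in> G" using HG by blast
        then show "x + y \<in> {x. f x \<in> G}" by simp
      qed
    qed
  qed
  show ?thesis
  proof
    assume "cont_wrt (open_c M \<P>) (open_L0 M) f"
    then show "cont_wrt (open_el M \<P>) (open_L0 M) f" by (rule c_el)
  next
    assume "cont_wrt (open_el M \<P>) (open_L0 M) f"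
    then show "cont_wrt (open_c M \<P>) (open_L0 M) f" using el_c unfolding cont_wrt_def by blast
  qed
qed

end
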